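(* Let $\mathcal{D}(\rho)=p_0\rho+p_1X\rho X+p_2Y\rho Y+p_3Z\rho Z$ and $\mathcal{E}(\rho)=q_0\rho+q_1X\rho X+q_2Y\rho Y+q_3Z\rho Z$ be arbitrary single-qubit Pauli channels. The entanglement-assisted quantum communication capacity over a quantum trajectory is $$Q_{\text{E,Q}}=\frac{C_{\text{E,Q}}}{2}=1+\frac12\Big[H(\alpha)+A_0\log_2A_0+\sum_{k=1}^3A_k^+\log_2A_k^++\sum_{k=1}^3A_k^-\log_2A_k^-\Big],$$ where $A_0=p_0q_0+p_1q_1+p_2q_2+p_3q_3$, $A_1^+=p_0q_1+p_1q_0$, $A_2^+=p_0q_2+p_2q_0$, $A_3^+=p_0q_3+p_3q_0$, $A_1^-=p_2q_3+p_3q_2$, $A_2^-=p_3q_1+p_1q_3$, $A_3^-=p_1q_2+p_2q_1$, $\alpha=A_0+A_1^++A_2^++A_3^+$, and $H(\alpha)=-\alpha\log_2\alpha-(1-\alpha)\log_2(1-\alpha)$.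
   Context: $X,Y,Z$ are Pauli matrices, $\sigma_0=I,\sigma_1=X,\sigma_2=Y,\sigma_3=Z$; $(p_i),(q_i)$ are probability vectors; $|\pm\rangle=(|0\rangle\pm|1\rangle)/\sqrt2$; $0\log_20=0$. For a Pauli channel $\mathcal{N}(\rho)=\sum_ir_i\sigma_i\rho\sigma_i$, the entanglement-assisted classical capacity (superdense coding, pre-shared EPR pair, equiprobable inputs) is $C_E(\mathcal{N})=2+\sum_ir_i\log_2r_i$, and the entanglement-assisted quantum capacity is taken, via the superdense coding/teleportation trade-off, to be $Q_E=C_E/2$. Quantum trajectory: with $D_i=\sqrt{p_i}\sigma_i$, $E_j=\sqrt{q_j}\sigma_j$, the switched channel on data $\rho$ and control $\omega=|+\rangle\langle+|$ is $\sum_{i,j}W_{i,j}(\rho\otimes\omega)W_{i,j}^\dagger$ with $W_{i,j}=E_jD_i\otimes|0\rangle\langle0|+D_iE_j\otimes|1\rangle\langle1|$. Its output has the form $p_+\mathcal{S}_+(\rho)\otimes|+\rangle\langle+|+p_-\mathcal{S}_-(\rho)\otimes|-\rangle\langle-|$ (commuting Kraus pairs go to the $|+\rangle$ branch, anticommuting pairs to the $|-\rangle$ branch), with $\mathcal{S}_\pm$ normalized Pauli channels; $C_{\text{E,Q}}=p_+C_E(\mathcal{S}_+)+p_-C_E(\mathcal{S}_-)$ (a zero-probability branch contributes zero) and $Q_{\text{E,Q}}$ is the corresponding quantum capacity. *)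

theory Defs
  imports "HOL-Analysis.Analysis"
begin

text \<open>Pauli matrices sigma_0 = I, sigma_1 = X, sigma_2 = Y, sigma_3 = Z as 2x2 complex
matrices (rows/columns indexed by the type 2 = {0,1}, i.e. basis |0>, |1>).\<close>

definition pauli :: "nat \<Rightarrow> complex^2^2" where
  "pauli k = (\<chi> r c.
     if k = 1 then (if r = c then 0 else 1)
     else if k = 2 then (if r = c then 0 else if r = 0 then - \<i> else \<i>)
     else if k = 3 then (if r \<noteq> c then 0 else if r = 0 then 1 else -1)
     else (if r = c then 1 else 0))"

definition cmat_scale :: "complex \<Rightarrow> complex^2^2 \<Rightarrow> complex^2^2" where
  "cmat_scale a A = (\<chi> r c. a * A $ r $ c)"

definition pauli_commute :: "nat \<Rightarrow> nat \<Rightarrow> bool" where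
  "pauli_commute i j \<longleftrightarrow> pauli i ** pauli j = pauli j ** pauli i"

definition pauli_prod_idx :: "nat \<Rightarrow> nat \<Rightarrow> nat" where
  "pauli_prod_idx i j = (THE k. k < 4 \<and> (\<exists>a. pauli i ** pauli j = cmat_scale a (pauli k)))"

definition xlog2 :: "real \<Rightarrow> real" where
  "xlog2 x = (if x = 0 then 0 else x * log 2 x)"

definition prob_vec4 :: "(nat \<Rightarrow> real) \<Rightarrow> bool" where
  "prob_vec4 p \<longleftrightarrow> (\<forall>i<4. 0 \<le> p i) \<and> (\<Sum>i<4. p i) = 1"

definition C_E :: "(nat \<Rightarrow> real) \<Rightarrow> real" where
  "C_E r = 2 + (\<Sum>i<4. xlog2 (r i))"

text \<open>Unnormalised weight of sigma_k in the |+> (b = True, commuting pairs) or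
  |-> (b = False, anticommuting pairs) branch of the switched channel output, where the
  Kraus pair (D_i, E_j) = (sqrt p_i sigma_i, sqrt q_j sigma_j) acts on the data as
  a multiple of sigma_i sigma_j (resp. sigma_j sigma_i).\<close>
definition branch_weight :: "bool \<Rightarrow> (nat \<Rightarrow> real) \<Rightarrow> (nat \<Rightarrow> real) \<Rightarrow> nat \<Rightarrow> real" where
  "branch_weight b p q k =
     (\<Sum>(i,j)\<in>{(i,j). i < 4 \<and> j < 4 \<and> pauli_commute i j = b \<and> pauli_prod_idx i j = k}.
        p i * q j)"

definition branch_prob :: "bool \<Rightarrow> (nat \<Rightarrow> real) \<Rightarrow> (nat \<Rightarrow> real) \<Rightarrow> real" where
  "branch_prob b p q =
     (\<Sum>(i,j)\<in>{(i,j). i < 4 \<and> j < 4 \<and> pauli_commute i j = b}. p i * q j)"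

definition branch_channel :: "bool \<Rightarrow> (nat \<Rightarrow> real) \<Rightarrow> (nat \<Rightarrow> real) \<Rightarrow> nat \<Rightarrow> real" where
  "branch_channel b p q k = branch_weight b p q k / branch_prob b p q"

definition branch_cap :: "bool \<Rightarrow> (nat \<Rightarrow> real) \<Rightarrow> (nat \<Rightarrow> real) \<Rightarrow> real" where
  "branch_cap b p q =
     (if branch_prob b p q = 0 then 0 else branch_prob b p q * C_E (branch_channel b p q))"

definition C_EQ :: "(nat \<Rightarrow> real) \<Rightarrow> (nat \<Rightarrow> real) \<Rightarrow> real" where
  "C_EQ p q = branch_cap True p q + branch_cap False p q"

definition Q_EQ :: "(nat \<Rightarrow> real) \<Rightarrow> (nat \<Rightarrow> real) \<Rightarrow> real" where
  "Q_EQ p q = C_EQ p q / 2"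

definition bin_entropy :: "real \<Rightarrow> real" where
  "bin_entropy a = - xlog2 a - xlog2 (1 - a)"

end

theory Submission
  imports Defs
begin

lemma mat_eq2: "(A::complex^2^2) = B \<longleftrightarrow> A$1$1=B$1$1 \<and> A$1$2=B$1$2 \<and> A$2$1 = B$2$1 \<and> A$2$2=B$2$2"
  by (auto simp: vec_eq_iff forall_2)

lemma mult2: "((A::complex^2^2) ** B)$r$c = A$r$1*B$1$c + A$r$2*B$2$c"
  by (simp add: matrix_matrix_mult_def UNIV_2)

lemma two0: "(0::2) = 2" by simp

lemma pauli_e: "pauli k $ 1 $ 1 = (if k=1 \<or> k=2 then 0 else if k = 3 then -1 else 1)"
  "pauli k $ 2 $ 2 = (if k=1 \<or> k=2 then 0 else 1)"
  "pauli k $ 1 $ 2 = (if k=1 then 1 else if k = 2 then \<i> else 0)"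
  "pauli k $ 2 $ 1 = (if k=1 then 1 else if k = 2 then -\<i> else 0)"
  by (auto simp: pauli_def two0)

lemma four: "(i::nat)<4 \<Longrightarrow> i=0 \<or> i=1 \<or> i=2 \<or> i=3" by auto

lemma comm_tab: "i<4 \<Longrightarrow> j<4 \<Longrightarrow> pauli_commute i j \<longleftrightarrow> (i=0 \<or> j=0 \<or> i=j)"
  unfolding pauli_commute_def mat_eq2 mult2
  by (elim four[elim_format] disjE; simp add: pauli_e)

definition pidx :: "nat \<Rightarrow> nat \<Rightarrow> nat" where
  "pidx i j = (if i=0 then j else if j=0 then i else if i=j then 0 else 6-i-j)"


definition wit :: "nat \<Rightarrow> nat \<Rightarrow> complex" where
  "wit i j = (if i=0 \<or> j=0 \<or> i=j then 1 else if (i,j)\<in>{(1,2),(2,3),(3,1)} then \<i> else -\<i>)"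

lemma scale_uniq: assumes "k<4" "m<4" "b \<noteq> 0"
  "cmat_scale a (pauli k) = cmat_scale b (pauli m)" shows "k = m"
proof -
  have e: "a * pauli k $ r $ c = b * pauli m $ r $ c" for r c
    using arg_cong[OF assms(4), of "\<lambda>M. M$r$c"] unfolding cmat_scale_def by simp
  note f = e[of 1 1] e[of 1 2] e[of 2 1] e[of 2 2]
  from four[OF assms(1)] four[OF assms(2)] show ?thesis
  proof (elim disjE)
  qed (use f assms(3) in \<open>simp_all add: pauli_e\<close>)
qed

lemma wit_nz: "wit i j \<noteq> 0" by (simp add: wit_def)

lemma idx_tab: "i<4 \<Longrightarrow> j<4 \<Longrightarrow> pauli_prod_idx i j = pidx i j"
proof -
  assume "i<4" "j<4"
  then have E: "pauli i ** pauli j = cmat_scale (wit i j) (pauli (pidx i j))"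
    unfolding mat_eq2 mult2 cmat_scale_def vec_lambda_beta
    by (elim four[elim_format] disjE; simp add: pauli_e pidx_def wit_def)
  have P: "pidx i j < 4" using \<open>i<4\<close> \<open>j<4\<close> by (auto simp: pidx_def)
  show ?thesis
    unfolding pauli_prod_idx_def
  proof (rule the_equality)
    show "pidx i j < 4 \<and> (\<exists>a. pauli i ** pauli j = cmat_scale a (pauli (pidx i j)))"
      using E P by blast
  next
    fix k assume "k < 4 \<and> (\<exists>a. pauli i ** pauli j = cmat_scale a (pauli k))"
    then obtain a where "k<4" "pauli i ** pauli j = cmat_scale a (pauli k)" by blast
    then show "k = pidx i j" using scale_uniq[OF _ P wit_nz] E by metis
  qed
qed


lemma sum_set4: "(\<Sum>(i,j)\<in>{(i,j). i<(4::nat) \<and> j<(4::nat) \<and> P i j}. g i j) =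
   (\<Sum>i<4. \<Sum>j<4. if P i j then g i j else (0::real))"
proof -
  have "{(i,j). i<(4::nat) \<and> j<(4::nat) \<and> P i j} = {x \<in> {..<4}\<times>{..<4}. P (fst x) (snd x)}"
    by auto
  then show ?thesis
    by (simp add: sum.inter_filter sum.cartesian_product case_prod_beta)
qed

lemma set_rw: "{(i,j). i<4 \<and> j<4 \<and> pauli_commute i j = b \<and> pauli_prod_idx i j = k}
   = {(i,j). i<4 \<and> j<4 \<and> ((i=0 \<or> j=0 \<or> i=j) = b \<and> pidx i j = k)}"
  using comm_tab idx_tab by auto

lemma set_rw2: "{(i,j). i<4 \<and> j<4 \<and> pauli_commute i j = b}
   = {(i,j). i<4 \<and> j<4 \<and> ((i=0 \<or> j=0 \<or> i=j) = b)}"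
  using comm_tab by auto

lemma bw: "branch_weight b p q k = (\<Sum>i<4. \<Sum>j<4. if ((i=0 \<or> j=0 \<or> i=j) = b \<and> pidx i j = k) then p i * q j else 0)"
  unfolding branch_weight_def set_rw by (rule sum_set4)

lemma bp: "branch_prob b p q = (\<Sum>i<4. \<Sum>j<4. if ((i=0 \<or> j=0 \<or> i=j) = b) then p i * q j else 0)"
  unfolding branch_prob_def set_rw2 by (rule sum_set4)

lemma xlog_scale: assumes "s>0" "w\<ge>0" shows "s * xlog2 (w/s) = xlog2 w - w * log 2 s"
proof (cases "w=0")
  case False
  then have "w>0" using assms by auto
  then show ?thesis using assms by (simp add: xlog2_def log_divide algebra_simps)
qed (simp add: xlog2_def)

lemma cap4: assumes "\<And>k. k<4 \<Longrightarrow> w k \<ge> 0" "s = (\<Sum>k<4. w k)"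
  shows "(if s = 0 then 0 else s * C_E (\<lambda>k. w k / s)) = (2* s + (\<Sum>k\<in>{..<4::nat}. xlog2 (w k)) - xlog2 s)"
proof (cases "s=0")
  case True
  then have "\<forall>k\<in>{..<4}. w k = 0" using assms sum_nonneg_eq_0_iff[of "{..<4::nat}" w] by auto
  then show ?thesis using True by (simp add: xlog2_def)
next
  case False
  then have sp: "s>0" using assms sum_nonneg[of "{..<4::nat}" w] by force
  have "s * C_E (\<lambda>k. w k / s) = 2* s + (\<Sum>k<4. s * xlog2 (w k / s))"
    by (simp add: C_E_def algebra_simps sum_distrib_left)
  also have "\<dots> = 2* s + (\<Sum>k<4. xlog2 (w k) - w k * log 2 s)"
    using xlog_scale[OF sp] assms(1) by simp
  also have "\<dots> = 2* s + (\<Sum>k\<in>{..<4::nat}. xlog2 (w k)) - xlog2 s"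
    using sp by (simp add: sum_subtractf sum_distrib_right[symmetric] assms(2)[symmetric] xlog2_def)
  finally show ?thesis using False by simp
qed

theorem corollary8:
  fixes p q :: "nat \<Rightarrow> real"
  assumes "prob_vec4 p" and "prob_vec4 q"
  defines "A0 \<equiv> p 0 * q 0 + p 1 * q 1 + p 2 * q 2 + p 3 * q 3"
      and "A1p \<equiv> p 0 * q 1 + p 1 * q 0"
      and "A2p \<equiv> p 0 * q 2 + p 2 * q 0"
      and "A3p \<equiv> p 0 * q 3 + p 3 * q 0"
      and "A1m \<equiv> p 2 * q 3 + p 3 * q 2"
      and "A2m \<equiv> p 3 * q 1 + p 1 * q 3"
      and "A3m \<equiv> p 1 * q 2 + p 2 * q 1"
  shows "Q_EQ p q = C_EQ p q / 2 \<and>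
         Q_EQ p q = 1 + (1/2) * (bin_entropy (A0 + A1p + A2p + A3p) + xlog2 A0
                      + xlog2 A1p + xlog2 A2p + xlog2 A3p
                      + xlog2 A1m + xlog2 A2m + xlog2 A3m)"
proof -
  have pn: "\<And>i. i<4 \<Longrightarrow> p i \<ge> 0" and qn: "\<And>i. i<4 \<Longrightarrow> q i \<ge> 0"
    using assms(1,2) unfolding prob_vec4_def by auto
  have ps: "p 0 + p 1 + p 2 + p 3 = 1" and qs: "q 0 + q 1 + q 2 + q 3 = 1"
    using assms(1,2) unfolding prob_vec4_def by (simp_all add: numeral_eq_Suc)
  define a where "a = A0 + A1p + A2p + A3p"
  define c where "c = A1m + A2m + A3m"
  have ac: "a + c = 1"
  proof -
    have "a + c = (p 0 + p 1 + p 2 + p 3) * (q 0 + q 1 + q 2 + q 3)"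
      unfolding a_def c_def A0_def A1p_def A2p_def A3p_def A1m_def A2m_def A3m_def
      by (simp add: algebra_simps)
    then show ?thesis using ps qs by simp
  qed
  have p4: "\<And>i. i<4 \<Longrightarrow> 0 \<le> p i * q i' " if "i' < 4" for i'
    using pn qn that by simp
  have wT: "branch_weight True p q 0 = A0" "branch_weight True p q 1 = A1p"
    "branch_weight True p q 2 = A2p" "branch_weight True p q 3 = A3p"
    unfolding bw A0_def A1p_def A2p_def A3p_def by (simp_all add: numeral_eq_Suc pidx_def)
  have wF: "branch_weight False p q 0 = 0" "branch_weight False p q 1 = A1m"
    "branch_weight False p q 2 = A2m" "branch_weight False p q 3 = A3m"
    unfolding bw A1m_def A2m_def A3m_def by (simp_all add: numeral_eq_Suc pidx_def)
  have bT: "branch_prob True p q = a" and bF: "branch_prob False p q = c"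
    unfolding bp a_def c_def A0_def A1p_def A2p_def A3p_def A1m_def A2m_def A3m_def
    by (simp_all add: numeral_eq_Suc)
  have nn: "0 \<le> A0" "0 \<le> A1p" "0 \<le> A2p" "0 \<le> A3p" "0 \<le> A1m" "0 \<le> A2m" "0 \<le> A3m"
    unfolding A0_def A1p_def A2p_def A3p_def A1m_def A2m_def A3m_def
    using pn[of 0] pn[of 1] pn[of 2] pn[of 3] qn[of 0] qn[of 1] qn[of 2] qn[of 3]
    by simp_all
  have capT: "branch_cap True p q = 2 * a + (xlog2 A0 + xlog2 A1p + xlog2 A2p + xlog2 A3p) - xlog2 a"
  proof -
    have "branch_cap True p q = (if a = 0 then 0 else a * C_E (\<lambda>k. branch_weight True p q k / a))"
      unfolding branch_cap_def branch_channel_def bT by simp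
    also have "\<dots> = 2 * a + (\<Sum>k\<in>{..<4::nat}. xlog2 (branch_weight True p q k)) - xlog2 a"
    proof (rule cap4)
      fix k :: nat assume "k<4"
      then show "0 \<le> branch_weight True p q k"
        using nn wT by (auto simp: less_Suc_eq numeral_eq_Suc)
    next
      show "a = (\<Sum>k<4. branch_weight True p q k)"
        using wT a_def by (simp add: numeral_eq_Suc)
    qed
    finally show ?thesis using wT by (simp add: numeral_eq_Suc)
  qed
  have capF: "branch_cap False p q = 2 * c + (xlog2 A1m + xlog2 A2m + xlog2 A3m) - xlog2 c"
  proof -
    have "branch_cap False p q = (if c = 0 then 0 else c * C_E (\<lambda>k. branch_weight False p q k / c))"
      unfolding branch_cap_def branch_channel_def bF by simp
    also have "\<dots> = 2 * c + (\<Sum>k\<in>{..<4::nat}. xlog2 (branch_weight False p q k)) - xlog2 c"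
    proof (rule cap4)
      fix k :: nat assume "k<4"
      then show "0 \<le> branch_weight False p q k"
        using nn wF by (auto simp: less_Suc_eq numeral_eq_Suc)
    next
      show "c = (\<Sum>k<4. branch_weight False p q k)"
        using wF c_def by (simp add: numeral_eq_Suc)
    qed
    finally show ?thesis using wF by (simp add: numeral_eq_Suc xlog2_def)
  qed
  have "c = 1 - a" using ac by simp
  then have cx: "xlog2 c = xlog2 (1 - a)" by simp
  show ?thesis
    unfolding Q_EQ_def C_EQ_def capT capF bin_entropy_def a_def[symmetric] using ac cx
    by (intro conjI refl) (simp add: field_simps; linarith)
qed

end
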